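(* (1) For fixed $x$, $\tau_*(x,t)$ and $\tau^*(x,t)$ are monotonically increasing in $t$, and for fixed $t$ they are monotonically decreasing in $x$. Moreover, for $t_1<t_2$ one has $\tau^*(x,t_1)\le\tau_*(x,t_2)$, and for $x_1<x_2$ one has $\tau_*(x_1,t)\ge\tau^*(x_2,t)$. (2) For fixed $t$, $y_*(x,t)$ and $y^*(x,t)$ are monotonically increasing in $x$, and for $x_1<x_2$ one has $y^*(x_1,t)\le y_*(x_2,t)$. (3) $\tau_*(0,t)=\tau^*(0,t)=t$. (4) $y_*$ is lower semicontinuous and $y^*$ is upper semicontinuous (as functions of $(x,t)$). (5) $\tau_*$ is lower semicontinuous and $\tau^*$ is upper semicontinuous.
   Context: Standing assumptions: $u_0,u_b:[0,\infty)\to\mathbb{R}$ bounded measurable with $u_b>0$; $\rho_0,\rho_b:[0,\infty)\to(0,\infty)$ positive locally bounded measurable. For $x,t,y,\tau\ge0$: $F(y,x,t)=\int_0^y[tu_0(\eta)+\eta-x]\rho_0(\eta)\,d\eta$, $G(\tau,x,t)=\int_0^\tau[x-u_b(\eta)(t-\eta)]\rho_b(\eta)u_b(\eta)\,d\eta$. The minima $\min_{y\ge0}F(y,x,t)$ and $\min_{\tau\ge0}G(\tau,x,t)$ are attained; $y_*(x,t)$, $y^*(x,t)$ denote the smallest and largest minimizers of $y\mapsto F(y,x,t)$, and $\tau_*(x,t)$, $\tau^*(x,t)$ the smallest and largest minimizers of $\tau\mapsto G(\tau,x,t)$. *)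

theory Defs
  imports "HOL-Analysis.Analysis"
begin

definition Ffun :: "(real \<Rightarrow> real) \<Rightarrow> (real \<Rightarrow> real) \<Rightarrow> real \<Rightarrow> real \<Rightarrow> real \<Rightarrow> real" where
  "Ffun u0 rho0 y x t = (LINT \<eta>:{0..y}|lborel. (t * u0 \<eta> + \<eta> - x) * rho0 \<eta>)"

definition Gfun :: "(real \<Rightarrow> real) \<Rightarrow> (real \<Rightarrow> real) \<Rightarrow> real \<Rightarrow> real \<Rightarrow> real \<Rightarrow> real" where
  "Gfun ub rhob \<tau> x t = (LINT \<eta>:{0..\<tau>}|lborel. (x - ub \<eta> * (t - \<eta>)) * rhob \<eta> * ub \<eta>)"

definition minimizers :: "(real \<Rightarrow> real) \<Rightarrow> real set" where
  "minimizers h = {y. 0 \<le> y \<and> (\<forall>z\<ge>0. h y \<le> h z)}"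

definition ylow :: "(real \<Rightarrow> real) \<Rightarrow> (real \<Rightarrow> real) \<Rightarrow> real \<Rightarrow> real \<Rightarrow> real" where
  "ylow u0 rho0 x t = Inf (minimizers (\<lambda>y. Ffun u0 rho0 y x t))"

definition yup :: "(real \<Rightarrow> real) \<Rightarrow> (real \<Rightarrow> real) \<Rightarrow> real \<Rightarrow> real \<Rightarrow> real" where
  "yup u0 rho0 x t = Sup (minimizers (\<lambda>y. Ffun u0 rho0 y x t))"

definition taulow :: "(real \<Rightarrow> real) \<Rightarrow> (real \<Rightarrow> real) \<Rightarrow> real \<Rightarrow> real \<Rightarrow> real" where
  "taulow ub rhob x t = Inf (minimizers (\<lambda>\<tau>. Gfun ub rhob \<tau> x t))"

definition tauup :: "(real \<Rightarrow> real) \<Rightarrow> (real \<Rightarrow> real) \<Rightarrow> real \<Rightarrow> real \<Rightarrow> real" where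
  "tauup ub rhob x t = Sup (minimizers (\<lambda>\<tau>. Gfun ub rhob \<tau> x t))"

definition lsc_on :: "'a::topological_space set \<Rightarrow> ('a \<Rightarrow> real) \<Rightarrow> bool" where
  "lsc_on D f \<longleftrightarrow> (\<forall>p\<in>D. \<forall>c. c < f p \<longrightarrow> eventually (\<lambda>q. c < f q) (at p within D))"

definition usc_on :: "'a::topological_space set \<Rightarrow> ('a \<Rightarrow> real) \<Rightarrow> bool" where
  "usc_on D f \<longleftrightarrow> (\<forall>p\<in>D. \<forall>c. f p < c \<longrightarrow> eventually (\<lambda>q. f q < c) (at p within D))"

end

theory Submission
  imports Defs
begin


definition locbm :: "(real \<Rightarrow> real) \<Rightarrow> bool" where
  "locbm g \<longleftrightarrow> set_borel_measurable lborel {0..} g \<and> (\<forall>M. \<exists>B. \<forall>\<eta>\<in>{0..M}. \<bar>g \<eta>\<bar> \<le> B)"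

definition II :: "(real \<Rightarrow> real) \<Rightarrow> real \<Rightarrow> real" where
  "II g y = (LINT \<eta>:{0..y}|lborel. g \<eta>)"

lemma locbm_meas_sub:
  assumes "locbm g" "S \<in> sets borel" "S \<subseteq> {0..}"
  shows "set_borel_measurable lborel S g"
proof -
  have m: "(\<lambda>x. indicator {0..} x *\<^sub>R g x) \<in> borel_measurable lborel"
    using assms(1) unfolding locbm_def set_borel_measurable_def by auto
  have "(\<lambda>x. indicator S x *\<^sub>R g x) = (\<lambda>x. indicator S x * (indicator {0..} x *\<^sub>R g x))"
    using assms(3) by (auto simp: fun_eq_iff split: split_indicator)
  moreover have "(\<lambda>x. indicator S x * (indicator {0..} x *\<^sub>R g x)) \<in> borel_measurable lborel"
    using m assms(2) by (intro borel_measurable_times) auto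
  ultimately show ?thesis unfolding set_borel_measurable_def by simp
qed

lemma locbm_bound:
  assumes "locbm g" obtains B where "B \<ge> 0" "\<And>\<eta>. \<eta> \<in> {0..M} \<Longrightarrow> \<bar>g \<eta>\<bar> \<le> B"
proof -
  obtain B where "\<forall>\<eta>\<in>{0..M}. \<bar>g \<eta>\<bar> \<le> B" using assms unfolding locbm_def by blast
  then show ?thesis using that[of "max 0 B"] by force
qed

lemma locbm_integrable:
  assumes "locbm g" "S \<in> sets borel" "S \<subseteq> {0..M}"
  shows "set_integrable lborel S g"
proof -
  obtain B where B: "B \<ge> 0" "\<And>\<eta>. \<eta> \<in> {0..M} \<Longrightarrow> \<bar>g \<eta>\<bar> \<le> B" using locbm_bound[OF assms(1)] by blast
  have m: "(\<lambda>x. indicator S x *\<^sub>R g x) \<in> borel_measurable lborel"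
  proof -
    have "S \<subseteq> {0..}" using assms(3) by auto
    then show ?thesis using locbm_meas_sub[OF assms(1,2)] unfolding set_borel_measurable_def by auto
  qed
  have "emeasure lborel S \<le> emeasure lborel {0..M}"
    using assms by (intro emeasure_mono) auto
  also have "\<dots> < \<infinity>" by (simp add: emeasure_lborel_Icc_eq)
  finally have fin: "emeasure lborel S < \<infinity>" .
  show ?thesis unfolding set_integrable_def
  proof (rule integrableI_bounded_set[where A=S and B=B])
    show "S \<in> sets lborel" using assms(2) by simp
    show "(\<lambda>x. indicator S x *\<^sub>R g x) \<in> borel_measurable lborel" by (rule m)
    show "emeasure lborel S < \<infinity>" by (rule fin)
    show "AE x in lborel. x \<in> S \<longrightarrow> norm (indicator S x *\<^sub>R g x) \<le> B"
    proof (rule AE_I2, rule impI)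
      fix x assume x: "x \<in> S"
      then have "x \<in> {0..M}" using assms(3) by blast
      then show "norm (indicator S x *\<^sub>R g x) \<le> B" using B(2) x by simp
    qed
    show "AE x in lborel. x \<notin> S \<longrightarrow> indicator S x *\<^sub>R g x = 0"
      by (rule AE_I2) simp
  qed
qed

lemma locbm_mult: "locbm f \<Longrightarrow> locbm g \<Longrightarrow> locbm (\<lambda>x. f x * g x)"
proof -
  assume f: "locbm f" and g: "locbm g"
  have "(\<lambda>x. indicator {0..} x *\<^sub>R (f x * g x)) = (\<lambda>x. (indicator {0..} x *\<^sub>R f x) * (indicator {0..} x *\<^sub>R g x))"
    by (auto simp: fun_eq_iff split: split_indicator)
  moreover have "(\<lambda>x. (indicator {0..} x *\<^sub>R f x) * (indicator {0..} x *\<^sub>R g x)) \<in> borel_measurable lborel"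
    using f g unfolding locbm_def set_borel_measurable_def by (intro borel_measurable_times) auto
  moreover have "\<exists>B. \<forall>\<eta>\<in>{0..M}. \<bar>f \<eta> * g \<eta>\<bar> \<le> B" for M
  proof -
    obtain B1 where B1: "B1 \<ge> 0" "\<And>\<eta>. \<eta> \<in> {0..M} \<Longrightarrow> \<bar>f \<eta>\<bar> \<le> B1" using locbm_bound[OF f] by blast
    obtain B2 where B2: "B2 \<ge> 0" "\<And>\<eta>. \<eta> \<in> {0..M} \<Longrightarrow> \<bar>g \<eta>\<bar> \<le> B2" using locbm_bound[OF g] by blast
    show ?thesis
      by (rule exI[of _ "B1*B2"]) (auto simp: abs_mult intro!: mult_mono B1 B2)
  qed
  ultimately show ?thesis unfolding locbm_def set_borel_measurable_def by simp
qed

lemma locbm_add: "locbm f \<Longrightarrow> locbm g \<Longrightarrow> locbm (\<lambda>x. f x + g x)"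
proof -
  assume f: "locbm f" and g: "locbm g"
  have "(\<lambda>x. indicator {0..} x *\<^sub>R (f x + g x)) = (\<lambda>x. (indicator {0..} x *\<^sub>R f x) + (indicator {0..} x *\<^sub>R g x))"
    by (auto simp: fun_eq_iff split: split_indicator)
  moreover have "(\<lambda>x. (indicator {0..} x *\<^sub>R f x) + (indicator {0..} x *\<^sub>R g x)) \<in> borel_measurable lborel"
    using f g unfolding locbm_def set_borel_measurable_def by (intro borel_measurable_add) auto
  moreover have "\<exists>B. \<forall>\<eta>\<in>{0..M}. \<bar>f \<eta> + g \<eta>\<bar> \<le> B" for M
  proof -
    obtain B1 where B1: "B1 \<ge> 0" "\<And>\<eta>. \<eta> \<in> {0..M} \<Longrightarrow> \<bar>f \<eta>\<bar> \<le> B1" using locbm_bound[OF f] by blast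
    obtain B2 where B2: "B2 \<ge> 0" "\<And>\<eta>. \<eta> \<in> {0..M} \<Longrightarrow> \<bar>g \<eta>\<bar> \<le> B2" using locbm_bound[OF g] by blast
    show ?thesis
      by (rule exI[of _ "B1+B2"]) (auto intro!: abs_triangle_ineq[THEN order_trans] add_mono B1 B2)
  qed
  ultimately show ?thesis unfolding locbm_def set_borel_measurable_def by simp
qed

lemma locbm_const: "locbm (\<lambda>x. c)"
  unfolding locbm_def set_borel_measurable_def by auto

lemma locbm_id: "locbm (\<lambda>x. x)"
proof -
  have "\<forall>M. \<exists>B. \<forall>\<eta>\<in>{0..M}. \<bar>\<eta>\<bar> \<le> (B::real)"
  proof
    fix M :: real show "\<exists>B. \<forall>\<eta>\<in>{0..M}. \<bar>\<eta>\<bar> \<le> B" by (rule exI[of _ M]) auto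
  qed
  then show ?thesis unfolding locbm_def set_borel_measurable_def by auto
qed

lemma locbm_scale: "locbm f \<Longrightarrow> locbm (\<lambda>x. c * f x)"
  using locbm_mult[OF locbm_const] by blast

lemma locbm_minus: "locbm f \<Longrightarrow> locbm (\<lambda>x. - f x)"
  using locbm_scale[of f "-1"] by simp

lemma locbm_diff: "locbm f \<Longrightarrow> locbm g \<Longrightarrow> locbm (\<lambda>x. f x - g x)"
proof -
  assume f: "locbm f" and g: "locbm g"
  have "locbm (\<lambda>x. f x + (- g x))" by (rule locbm_add[OF f locbm_minus[OF g]])
  then show ?thesis by (simp only: diff_conv_add_uminus)
qed




lemma II_diff_open:
  assumes g: "locbm g" and "0 \<le> a" "a \<le> b"
  shows "II g b - II g a = (LINT \<eta>:{a<..<b}|lborel. g \<eta>)"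
proof -
  have u: "{0..b} = {0..a} \<union> {a<..b}" using assms by auto
  have "II g b = (LINT \<eta>:{0..a}|lborel. g \<eta>) + (LINT \<eta>:{a<..b}|lborel. g \<eta>)"
    unfolding II_def u
  proof (rule set_integral_Un)
    show "set_integrable lborel {0..a} g" using assms by (intro locbm_integrable[OF g, of _ b]) auto
    show "set_integrable lborel {a<..b} g" using assms by (intro locbm_integrable[OF g, of _ b]) auto
  qed auto
  moreover have "(LINT \<eta>:{a<..b}|lborel. g \<eta>) = (LINT \<eta>:{a<..<b}|lborel. g \<eta>)"
  proof (rule set_integral_cong_set)
    show "set_borel_measurable lborel {a<..<b} g" using assms by (intro locbm_meas_sub[OF g]) auto
    show "set_borel_measurable lborel {a<..b} g" using assms by (intro locbm_meas_sub[OF g]) auto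
    show "AE x in lborel. (x \<in> {a<..<b}) = (x \<in> {a<..b})"
      using AE_lborel_singleton[of b] by eventually_elim auto
  qed
  ultimately show ?thesis unfolding II_def by simp
qed

lemma II_pos:
  assumes g: "locbm g" and "0 \<le> a" "a < b" and pos: "\<And>\<eta>. a < \<eta> \<Longrightarrow> \<eta> < b \<Longrightarrow> g \<eta> > 0"
  shows "II g b - II g a > 0"
proof -
  let ?h = "\<lambda>x. indicator {a<..<b} x *\<^sub>R g x"
  have sub: "{a<..<b} \<subseteq> {0..b}" using assms by auto
  have int: "integrable lborel ?h"
    using locbm_integrable[OF g _ sub] unfolding set_integrable_def by auto
  have nn: "AE x in lborel. 0 \<le> ?h x" by (rule AE_I2) (use pos in \<open>auto split: split_indicator intro: less_imp_le\<close>)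
  have ge: "integral\<^sup>L lborel ?h \<ge> 0" using nn by (intro integral_nonneg_AE) auto
  have "integral\<^sup>L lborel ?h \<noteq> 0"
  proof
    assume "integral\<^sup>L lborel ?h = 0"
    then have "AE x in lborel. ?h x = 0" using integral_nonneg_eq_0_iff_AE[OF int nn] by simp
    then have "AE x in lborel. x \<notin> {a<..<b}"
      by eventually_elim (use pos in \<open>force split: split_indicator\<close>)
    then have "{a<..<b} \<in> null_sets lborel" by (subst AE_iff_null_sets) auto
    then have "emeasure lborel {a<..<b} = 0" by auto
    then show False using assms by simp
  qed
  with ge have "integral\<^sup>L lborel ?h > 0" by simp
  then show ?thesis using II_diff_open[OF g assms(2)] assms(3)
    unfolding set_lebesgue_integral_def by simp
qed

lemma II_lip:
  assumes g: "locbm g"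
  obtains C where "C \<ge> 0" "\<And>a b. a \<in> {0..M} \<Longrightarrow> b \<in> {0..M} \<Longrightarrow> \<bar>II g b - II g a\<bar> \<le> C * \<bar>b - a\<bar>"
proof -
  obtain B where B: "B \<ge> 0" "\<And>\<eta>. \<eta> \<in> {0..M} \<Longrightarrow> \<bar>g \<eta>\<bar> \<le> B" using locbm_bound[OF g] by blast
  have key: "\<bar>II g b - II g a\<bar> \<le> B * (b - a)" if "0 \<le> a" "a \<le> b" "b \<le> M" for a b
  proof -
    have i1: "set_integrable lborel {a<..<b} g" using that by (intro locbm_integrable[OF g, of _ M]) auto
    have i2: "set_integrable lborel {a<..<b} (\<lambda>_. B)" using that by (intro locbm_integrable[OF locbm_const, of _ M]) auto
    have i3: "set_integrable lborel {a<..<b} (\<lambda>x. - g x)" using that by (intro locbm_integrable[OF locbm_minus[OF g], of _ M]) auto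
    have c: "(LINT \<eta>:{a<..<b}|lborel. B) = B * (b - a)"
      using that by (subst set_integral_const) auto
    have "(LINT \<eta>:{a<..<b}|lborel. g \<eta>) \<le> (LINT \<eta>:{a<..<b}|lborel. B)"
    proof (rule set_integral_mono[OF i1 i2])
      fix x assume "x \<in> {a<..<b}" then have "\<bar>g x\<bar> \<le> B" using B(2) that by auto
      then show "g x \<le> B" by simp
    qed
    moreover have "(LINT \<eta>:{a<..<b}|lborel. - g \<eta>) \<le> (LINT \<eta>:{a<..<b}|lborel. B)"
    proof (rule set_integral_mono[OF i3 i2])
      fix x assume "x \<in> {a<..<b}" then have "\<bar>g x\<bar> \<le> B" using B(2) that by auto
      then show "- g x \<le> B" by simp
    qed
    moreover have "(LINT \<eta>:{a<..<b}|lborel. - g \<eta>) = - (LINT \<eta>:{a<..<b}|lborel. g \<eta>)"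
      using i1 by (rule set_integral_uminus)
    ultimately show ?thesis using II_diff_open[OF g that(1,2)] c by linarith
  qed
  show ?thesis
  proof (rule that[of B])
    fix a b assume ab: "a \<in> {0..M}" "b \<in> {0..M}"
    show "\<bar>II g b - II g a\<bar> \<le> B * \<bar>b - a\<bar>"
    proof (cases "a \<le> b")
      case True then show ?thesis using key[of a b] ab by auto
    next
      case False then show ?thesis using key[of b a] ab by (auto simp: abs_minus_commute)
    qed
  qed (use B in auto)
qed

lemma II_cont: "locbm g \<Longrightarrow> continuous_on {0..M} (II g)"
proof -
  assume g: "locbm g"
  obtain C where C: "C \<ge> 0" "\<And>a b. a \<in> {0..M} \<Longrightarrow> b \<in> {0..M} \<Longrightarrow> \<bar>II g b - II g a\<bar> \<le> C * \<bar>b - a\<bar>"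
    using II_lip[OF g] by blast
  have "C-lipschitz_on {0..M} (II g)"
    by (rule lipschitz_onI) (use C in \<open>auto simp: dist_real_def abs_minus_commute\<close>)
  then show ?thesis by (rule lipschitz_on_continuous_on)
qed

lemma II_bounded:
  assumes g: "locbm g" obtains C where "C \<ge> 0" "\<And>y. y \<in> {0..M} \<Longrightarrow> \<bar>II g y\<bar> \<le> C"
proof -
  obtain C where C: "C \<ge> 0" "\<And>a b. a \<in> {0..M} \<Longrightarrow> b \<in> {0..M} \<Longrightarrow> \<bar>II g b - II g a\<bar> \<le> C * \<bar>b - a\<bar>"
    using II_lip[OF g] by blast
  show ?thesis
  proof (rule that[of "\<bar>II g 0\<bar> + C * \<bar>M\<bar>"])
    fix y assume y: "y \<in> {0..M}"
    then have "\<bar>II g y - II g 0\<bar> \<le> C * \<bar>y - 0\<bar>" using C(2)[of 0 y] by auto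
    moreover have "C * \<bar>y - 0\<bar> \<le> C * \<bar>M\<bar>" using y C(1) by (intro mult_left_mono) auto
    ultimately show "\<bar>II g y\<bar> \<le> \<bar>II g 0\<bar> + C * \<bar>M\<bar>" by linarith
  qed (use C in auto)
qed

lemma II_add:
  assumes "locbm f" "locbm g" "0 \<le> y"
  shows "II (\<lambda>x. f x + g x) y = II f y + II g y"
proof -
  have i1: "set_integrable lborel {0..y} f" by (rule locbm_integrable[OF assms(1)]) auto
  have i2: "set_integrable lborel {0..y} g" by (rule locbm_integrable[OF assms(2)]) auto
  show ?thesis unfolding II_def by (rule set_integral_add(2)[OF i1 i2])
qed

lemma II_scale: "II (\<lambda>x. c * f x) y = c * II f y"
  unfolding II_def by (rule set_integral_mult_right)




lemma minimizers_nonneg: "s \<in> minimizers h \<Longrightarrow> 0 \<le> s"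
  unfolding minimizers_def by auto

lemma Inf_minimizers_ge0: "minimizers h \<noteq> {} \<Longrightarrow> 0 \<le> Inf (minimizers h)"
  by (rule cInf_greatest) (auto simp: minimizers_def)

lemma Inf_minimizers_le: "s \<in> minimizers h \<Longrightarrow> Inf (minimizers h) \<le> s"
  by (rule cInf_lower) (auto simp: minimizers_def bdd_below_def)

lemma min_lsc:
  fixes h :: "'a::metric_space \<Rightarrow> real \<Rightarrow> real"
  assumes pD: "p \<in> D"
    and ne: "\<forall>q\<in>D. minimizers (h q) \<noteq> {}"
    and cont: "\<forall>M. continuous_on {0..M} (h p)"
    and unif: "\<forall>M e. e > 0 \<longrightarrow> (\<exists>r>0. \<forall>q\<in>D. dist q p < r \<longrightarrow> (\<forall>s\<in>{0..M}. \<bar>h q s - h p s\<bar> < e))"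
    and c: "c < Inf (minimizers (h p))"
  shows "eventually (\<lambda>q. c < Inf (minimizers (h q))) (at p within D)"
proof (cases "c < 0")
  case True
  show ?thesis unfolding eventually_at
    by (rule exI[of _ 1]) (use True Inf_minimizers_ge0 ne in force)
next
  case False
  let ?Mp = "minimizers (h p)"
  obtain ys where ys: "ys \<in> ?Mp" using ne pD by blast
  define c' where "c' = (c + Inf ?Mp) / 2"
  have c'0: "0 \<le> c'" "c < c'" "c' < Inf ?Mp" using False c unfolding c'_def by auto
  have c'ys: "c' < ys" using Inf_minimizers_le[OF ys] c'0 by linarith
  obtain z0 where z0: "z0 \<in> {0..c'}" "\<And>z. z \<in> {0..c'} \<Longrightarrow> h p z0 \<le> h p z"
    using continuous_attains_inf[of "{0..c'}" "h p"] cont c'0 by auto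
  have "z0 \<notin> ?Mp" using Inf_minimizers_le[of z0] z0(1) c'0 by force
  then obtain z where z: "z \<ge> 0" "h p z < h p z0" using z0(1) unfolding minimizers_def by force
  have ysmin: "\<And>w. w \<ge> 0 \<Longrightarrow> h p ys \<le> h p w" using ys unfolding minimizers_def by auto
  define \<delta> where "\<delta> = h p z0 - h p ys"
  have \<delta>: "\<delta> > 0" using ysmin[OF z(1)] z(2) unfolding \<delta>_def by linarith
  obtain r where r: "r > 0" "\<And>q s. q \<in> D \<Longrightarrow> dist q p < r \<Longrightarrow> s \<in> {0..ys} \<Longrightarrow> \<bar>h q s - h p s\<bar> < \<delta>/2"
    using unif \<delta> by (meson half_gt_zero)
  show ?thesis unfolding eventually_at
  proof (rule exI[of _ r], intro conjI ballI impI)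
    fix q assume q: "q \<in> D" "q \<noteq> p \<and> dist q p < r"
    have big: "c' < s" if s: "s \<in> minimizers (h q)" for s
    proof (rule ccontr)
      assume "\<not> c' < s"
      then have s1: "s \<in> {0..c'}" using minimizers_nonneg[OF s] by auto
      have ys0: "0 \<le> ys" using minimizers_nonneg[OF ys] .
      have "h q s \<le> h q ys" using s ys0 unfolding minimizers_def by auto
      moreover have "\<bar>h q s - h p s\<bar> < \<delta>/2" using r(2)[OF q(1) _ , of s] q s1 c'ys by auto
      moreover have "\<bar>h q ys - h p ys\<bar> < \<delta>/2" using r(2)[OF q(1) _ , of ys] q ys0 by auto
      moreover have "h p z0 \<le> h p s" using z0(2) s1 by auto
      ultimately have "h p s - \<delta>/2 < h q s" "h q ys < h p ys + \<delta>/2" "h q s \<le> h q ys" "h p z0 \<le> h p s"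
        by linarith+
      then show False using \<delta>_def by linarith
    qed
    have "c' \<le> Inf (minimizers (h q))"
      by (rule cInf_greatest) (use ne q big in \<open>auto intro: less_imp_le\<close>)
    then show "c < Inf (minimizers (h q))" using c'0 by linarith
  qed (use r in auto)
qed

lemma min_usc:
  fixes h :: "'a::metric_space \<Rightarrow> real \<Rightarrow> real"
  assumes pD: "p \<in> D"
    and ne: "\<forall>q\<in>D. minimizers (h q) \<noteq> {}"
    and cont: "\<forall>M. continuous_on {0..M} (h p)"
    and unif: "\<forall>M e. e > 0 \<longrightarrow> (\<exists>r>0. \<forall>q\<in>D. dist q p < r \<longrightarrow> (\<forall>s\<in>{0..M}. \<bar>h q s - h p s\<bar> < e))"
    and bnd: "\<exists>Y r. r > 0 \<and> (\<forall>q\<in>D. dist q p < r \<longrightarrow> minimizers (h q) \<subseteq> {..Y})"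
    and c: "Sup (minimizers (h p)) < c"
  shows "eventually (\<lambda>q. Sup (minimizers (h q)) < c) (at p within D)"
proof -
  let ?Mp = "minimizers (h p)"
  obtain Y r1 where Y: "r1 > 0" "\<And>q. q \<in> D \<Longrightarrow> dist q p < r1 \<Longrightarrow> minimizers (h q) \<subseteq> {..Y}"
    using bnd by blast
  have MpY: "?Mp \<subseteq> {..Y}" using Y pD by auto
  obtain ys where ys: "ys \<in> ?Mp" using ne pD by blast
  have ys0: "0 \<le> ys" using minimizers_nonneg[OF ys] .
  have ysS: "ys \<le> Sup ?Mp" by (rule cSup_upper[OF ys]) (use MpY in \<open>auto simp: bdd_above_def\<close>)
  define c' where "c' = (c + Sup ?Mp) / 2"
  have c'0: "c' < c" "Sup ?Mp < c'" using c unfolding c'_def by auto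
  show ?thesis
  proof (cases "Y < c'")
    case True
    show ?thesis unfolding eventually_at
    proof (rule exI[of _ r1], intro conjI ballI impI)
      fix q assume q: "q \<in> D" "q \<noteq> p \<and> dist q p < r1"
      have "Sup (minimizers (h q)) \<le> Y"
        by (rule cSup_least) (use ne q Y in auto)
      then show "Sup (minimizers (h q)) < c" using True c'0 by linarith
    qed (use Y in auto)
  next
    case False
    obtain z0 where z0: "z0 \<in> {c'..Y}" "\<And>z. z \<in> {c'..Y} \<Longrightarrow> h p z0 \<le> h p z"
    proof -
      have "continuous_on {c'..Y} (h p)"
        using cont by (rule continuous_on_subset[OF spec[of _ Y]]) (use ysS ys0 c'0 in auto)
      then show ?thesis using continuous_attains_inf[of "{c'..Y}" "h p"] False that by auto
    qed
    have z00: "0 \<le> z0" using z0(1) ysS ys0 c'0 by auto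
    have "z0 \<notin> ?Mp"
    proof
      assume "z0 \<in> ?Mp"
      then have "z0 \<le> Sup ?Mp" by (rule cSup_upper) (use MpY in \<open>auto simp: bdd_above_def\<close>)
      then show False using z0(1) c'0 by auto
    qed
    then obtain z where z: "z \<ge> 0" "h p z < h p z0" using z00 unfolding minimizers_def by force
    have ysmin: "\<And>w. w \<ge> 0 \<Longrightarrow> h p ys \<le> h p w" using ys unfolding minimizers_def by auto
    define \<delta> where "\<delta> = h p z0 - h p ys"
    have \<delta>: "\<delta> > 0" using ysmin[OF z(1)] z(2) unfolding \<delta>_def by linarith
    obtain r where r: "r > 0" "\<And>q s. q \<in> D \<Longrightarrow> dist q p < r \<Longrightarrow> s \<in> {0..Y} \<Longrightarrow> \<bar>h q s - h p s\<bar> < \<delta>/2"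
      using unif \<delta> by (meson half_gt_zero)
    show ?thesis unfolding eventually_at
    proof (rule exI[of _ "min r r1"], intro conjI ballI impI)
      fix q assume q: "q \<in> D" "q \<noteq> p \<and> dist q p < min r r1"
      have small: "s < c'" if s: "s \<in> minimizers (h q)" for s
      proof (rule ccontr)
        assume "\<not> s < c'"
        moreover have "s \<le> Y" using Y(2)[OF q(1)] q s by auto
        ultimately have s1: "s \<in> {c'..Y}" by auto
        have "h q s \<le> h q ys" using s ys0 unfolding minimizers_def by auto
        moreover have "\<bar>h q s - h p s\<bar> < \<delta>/2" using r(2)[OF q(1) _ , of s] q s1 ys0 ysS c'0 by auto
        moreover have "\<bar>h q ys - h p ys\<bar> < \<delta>/2" using r(2)[OF q(1) _ , of ys] q ys0 ysS c'0 False by auto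
        moreover have "h p z0 \<le> h p s" using z0(2) s1 by auto
        ultimately have "h p s - \<delta>/2 < h q s" "h q ys < h p ys + \<delta>/2" "h q s \<le> h q ys" "h p z0 \<le> h p s"
        by linarith+
      then show False using \<delta>_def by linarith
      qed
      have "Sup (minimizers (h q)) \<le> c'"
        by (rule cSup_least) (use ne q small in \<open>auto intro: less_imp_le\<close>)
      then show "Sup (minimizers (h q)) < c" using c'0 by linarith
    qed (use r Y in auto)
  qed
qed




lemma II_minus: "II (\<lambda>x. - f x) y = - II f y"
  unfolding II_def set_lebesgue_integral_def by simp

lemma II_lin3:
  assumes "locbm a" "locbm b" "locbm c" "0 \<le> s"
  shows "II (\<lambda>\<eta>. a \<eta> + x * b \<eta> + t * c \<eta>) s = II a s + x * II b s + t * II c s"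
proof -
  have "II (\<lambda>\<eta>. a \<eta> + x * b \<eta> + t * c \<eta>) s = II (\<lambda>\<eta>. a \<eta> + x * b \<eta>) s + II (\<lambda>\<eta>. t * c \<eta>) s"
    using assms by (intro II_add locbm_add locbm_scale) auto
  also have "II (\<lambda>\<eta>. a \<eta> + x * b \<eta>) s = II a s + II (\<lambda>\<eta>. x * b \<eta>) s"
    using assms by (intro II_add locbm_add locbm_scale) auto
  finally show ?thesis by (simp add: II_scale)
qed

lemma Phi_cont:
  assumes "locbm a" "locbm b" "locbm c"
    and h: "\<And>s. 0 \<le> s \<Longrightarrow> h s = II a s + x * II b s + t * II c s"
  shows "continuous_on {0..M} h"
proof -
  have "continuous_on {0..M} (\<lambda>s. II a s + x * II b s + t * II c s)"
    using assms(1-3) by (intro continuous_intros II_cont)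
  then show ?thesis by (rule continuous_on_cong[THEN iffD1, rotated 2]) (auto simp: h)
qed

lemma Phi_unif:
  fixes h :: "real \<times> real \<Rightarrow> real \<Rightarrow> real"
  assumes "locbm b" "locbm c"
    and h: "\<And>q s. 0 \<le> s \<Longrightarrow> h q s = II a s + fst q * II b s + snd q * II c s"
    and e: "e > 0"
  shows "\<exists>r>0. \<forall>q\<in>D. dist q p < r \<longrightarrow> (\<forall>s\<in>{0..M}. \<bar>h q s - h p s\<bar> < e)"
proof -
  obtain Cb where Cb: "Cb \<ge> 0" "\<And>y. y \<in> {0..M} \<Longrightarrow> \<bar>II b y\<bar> \<le> Cb" using II_bounded[OF assms(1)] by blast
  obtain Cc where Cc: "Cc \<ge> 0" "\<And>y. y \<in> {0..M} \<Longrightarrow> \<bar>II c y\<bar> \<le> Cc" using II_bounded[OF assms(2)] by blast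
  define K where "K = Cb + Cc + 1"
  have K: "K > 0" using Cb Cc unfolding K_def by auto
  show ?thesis
  proof (rule exI[of _ "e / K"], intro conjI ballI impI)
    show "e / K > 0" using e K by auto
    fix q s assume q: "q \<in> D" "dist q p < e / K" and s: "s \<in> {0..M}"
    have d1: "\<bar>fst q - fst p\<bar> \<le> dist q p" using dist_fst_le[of q p] by (simp add: dist_real_def)
    have d2: "\<bar>snd q - snd p\<bar> \<le> dist q p" using dist_snd_le[of q p] by (simp add: dist_real_def)
    have "h q s - h p s = (fst q - fst p) * II b s + (snd q - snd p) * II c s"
      using s by (simp add: h algebra_simps)
    then have "\<bar>h q s - h p s\<bar> \<le> \<bar>fst q - fst p\<bar> * \<bar>II b s\<bar> + \<bar>snd q - snd p\<bar> * \<bar>II c s\<bar>"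
      using abs_triangle_ineq[of "(fst q - fst p) * II b s" "(snd q - snd p) * II c s"] by (simp add: abs_mult)
    also have "\<dots> \<le> dist q p * Cb + dist q p * Cc"
      using d1 d2 Cb Cc s by (intro add_mono mult_mono) auto
    also have "\<dots> \<le> dist q p * K" unfolding K_def by (simp add: algebra_simps)
    also have "\<dots> < (e / K) * K" using q(2) K by (intro mult_strict_right_mono) auto
    also have "\<dots> = e" using K by simp
    finally show "\<bar>h q s - h p s\<bar> < e" .
  qed
qed

lemma min_order:
  assumes f: "\<And>s. 0 \<le> s \<Longrightarrow> f2 s = f1 s - d * P s" and d: "d > 0"
    and P: "\<And>u v. 0 \<le> u \<Longrightarrow> u < v \<Longrightarrow> P u < P v"
    and a: "a \<in> minimizers f1" and b: "b \<in> minimizers f2"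
  shows "a \<le> b"
proof (rule ccontr)
  assume "\<not> a \<le> b"
  then have ba: "b < a" by simp
  have a0: "0 \<le> a" and b0: "0 \<le> b" using a b unfolding minimizers_def by auto
  have "f1 a \<le> f1 b" using a b0 unfolding minimizers_def by auto
  moreover have "f2 b \<le> f2 a" using b a0 unfolding minimizers_def by auto
  ultimately have "d * P a \<le> d * P b" using f a0 b0 by auto
  then have "P a \<le> P b" using d by simp
  moreover have "P b < P a" using P[OF b0 ba] .
  ultimately show False by simp
qed

lemma minset_order:
  fixes S1 S2 :: "real set"
  assumes "S1 \<noteq> {}" "S2 \<noteq> {}" "S1 \<subseteq> {0..Y1}" "S2 \<subseteq> {0..Y2}"
    and le: "\<And>a b. a \<in> S1 \<Longrightarrow> b \<in> S2 \<Longrightarrow> a \<le> b"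
  shows "Sup S1 \<le> Inf S2" "Inf S1 \<le> Inf S2" "Sup S1 \<le> Sup S2"
proof -
  have bb1: "bdd_below S1" "bdd_above S1"
    by (rule bdd_belowI[of _ 0], use assms(3) in auto) (rule bdd_aboveI[of _ Y1], use assms(3) in auto)
  have bb2: "bdd_below S2" "bdd_above S2"
    by (rule bdd_belowI[of _ 0], use assms(4) in auto) (rule bdd_aboveI[of _ Y2], use assms(4) in auto)
  show si: "Sup S1 \<le> Inf S2"
    using assms(1,2) le by (intro cSup_least cInf_greatest) auto
  show "Inf S1 \<le> Inf S2" using cInf_le_cSup[OF assms(1) bb1(2) bb1(1)] si by linarith
  show "Sup S1 \<le> Sup S2" using cInf_le_cSup[OF assms(2) bb2(2) bb2(1)] si by linarith
qed




locale lwr =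
  fixes u0 ub rho0 rhob :: "real \<Rightarrow> real"
  assumes u0_meas: "set_borel_measurable lborel {0..} u0"
      and ub_meas: "set_borel_measurable lborel {0..} ub"
      and rho0_meas: "set_borel_measurable lborel {0..} rho0"
      and rhob_meas: "set_borel_measurable lborel {0..} rhob"
      and u0_bdd: "\<exists>B. \<forall>\<eta>\<ge>0. \<bar>u0 \<eta>\<bar> \<le> B"
      and ub_bdd: "\<exists>B. \<forall>\<eta>\<ge>0. \<bar>ub \<eta>\<bar> \<le> B"
      and ub_pos: "\<forall>\<eta>\<ge>0. ub \<eta> > 0"
      and rho0_pos: "\<forall>\<eta>\<ge>0. rho0 \<eta> > 0"
      and rhob_pos: "\<forall>\<eta>\<ge>0. rhob \<eta> > 0"
      and rho0_locbdd: "\<forall>M. \<exists>B. \<forall>\<eta>\<in>{0..M}. rho0 \<eta> \<le> B"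
      and rhob_locbdd: "\<forall>M. \<exists>B. \<forall>\<eta>\<in>{0..M}. rhob \<eta> \<le> B"
      and F_attained: "\<forall>x\<ge>0. \<forall>t\<ge>0. \<exists>y\<ge>0. \<forall>z\<ge>0. Ffun u0 rho0 y x t \<le> Ffun u0 rho0 z x t"
      and G_attained: "\<forall>x\<ge>0. \<forall>t\<ge>0. \<exists>\<tau>\<ge>0. \<forall>s\<ge>0. Gfun ub rhob \<tau> x t \<le> Gfun ub rhob s x t"
begin

lemma lb_u0: "locbm u0"
proof -
  obtain B where "\<forall>\<eta>\<ge>0. \<bar>u0 \<eta>\<bar> \<le> B" using u0_bdd by blast
  then have "\<forall>M. \<exists>B'. \<forall>\<eta>\<in>{0..M}. \<bar>u0 \<eta>\<bar> \<le> B'" by (intro allI exI[of _ B]) auto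
  then show ?thesis using u0_meas unfolding locbm_def by blast
qed

lemma lb_ub: "locbm ub"
proof -
  obtain B where "\<forall>\<eta>\<ge>0. \<bar>ub \<eta>\<bar> \<le> B" using ub_bdd by blast
  then have "\<forall>M. \<exists>B'. \<forall>\<eta>\<in>{0..M}. \<bar>ub \<eta>\<bar> \<le> B'" by (intro allI exI[of _ B]) auto
  then show ?thesis using ub_meas unfolding locbm_def by blast
qed

lemma lb_rho0: "locbm rho0"
proof -
  have "\<forall>M. \<exists>B. \<forall>\<eta>\<in>{0..M}. \<bar>rho0 \<eta>\<bar> \<le> B"
  proof
    fix M obtain B where B: "\<forall>\<eta>\<in>{0..M}. rho0 \<eta> \<le> B" using rho0_locbdd by blast
    show "\<exists>B. \<forall>\<eta>\<in>{0..M}. \<bar>rho0 \<eta>\<bar> \<le> B"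
    proof (rule exI[of _ B], rule ballI)
      fix \<eta> assume "\<eta> \<in> {0..M}"
      then show "\<bar>rho0 \<eta>\<bar> \<le> B" using B rho0_pos by (simp add: less_imp_le)
    qed
  qed
  then show ?thesis using rho0_meas unfolding locbm_def by blast
qed

lemma lb_rhob: "locbm rhob"
proof -
  have "\<forall>M. \<exists>B. \<forall>\<eta>\<in>{0..M}. \<bar>rhob \<eta>\<bar> \<le> B"
  proof
    fix M obtain B where B: "\<forall>\<eta>\<in>{0..M}. rhob \<eta> \<le> B" using rhob_locbdd by blast
    show "\<exists>B. \<forall>\<eta>\<in>{0..M}. \<bar>rhob \<eta>\<bar> \<le> B"
    proof (rule exI[of _ B], rule ballI)
      fix \<eta> assume "\<eta> \<in> {0..M}"
      then show "\<bar>rhob \<eta>\<bar> \<le> B" using B rhob_pos by (simp add: less_imp_le)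
    qed
  qed
  then show ?thesis using rhob_meas unfolding locbm_def by blast
qed

lemmas lbs = lb_u0 lb_ub lb_rho0 lb_rhob

lemma lb_aF: "locbm (\<lambda>\<eta>. \<eta> * rho0 \<eta>)" by (rule locbm_mult[OF locbm_id lb_rho0])
lemma lb_bF: "locbm (\<lambda>\<eta>. - rho0 \<eta>)" by (rule locbm_minus[OF lb_rho0])
lemma lb_cF: "locbm (\<lambda>\<eta>. u0 \<eta> * rho0 \<eta>)" by (rule locbm_mult[OF lb_u0 lb_rho0])
lemma lb_H: "locbm (\<lambda>\<eta>. ub \<eta> * ub \<eta> * rhob \<eta>)" by (rule locbm_mult[OF locbm_mult[OF lb_ub lb_ub] lb_rhob])
lemma lb_aG: "locbm (\<lambda>\<eta>. \<eta> * (ub \<eta> * ub \<eta> * rhob \<eta>))" by (rule locbm_mult[OF locbm_id lb_H])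
lemma lb_bG: "locbm (\<lambda>\<eta>. rhob \<eta> * ub \<eta>)" by (rule locbm_mult[OF lb_rhob lb_ub])
lemma lb_cG: "locbm (\<lambda>\<eta>. - (ub \<eta> * ub \<eta> * rhob \<eta>))" by (rule locbm_minus[OF lb_H])

lemma F_II: "Ffun u0 rho0 y x t = II (\<lambda>\<eta>. (t * u0 \<eta> + \<eta> - x) * rho0 \<eta>) y"
  unfolding Ffun_def II_def ..

lemma G_II: "Gfun ub rhob \<tau> x t = II (\<lambda>\<eta>. (x - ub \<eta> * (t - \<eta>)) * rhob \<eta> * ub \<eta>) \<tau>"
  unfolding Gfun_def II_def ..

lemma F_eq: "0 \<le> y \<Longrightarrow> Ffun u0 rho0 y x t =
   II (\<lambda>\<eta>. \<eta> * rho0 \<eta>) y + x * II (\<lambda>\<eta>. - rho0 \<eta>) y + t * II (\<lambda>\<eta>. u0 \<eta> * rho0 \<eta>) y"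
proof -
  assume y: "0 \<le> y"
  have "(\<lambda>\<eta>. (t * u0 \<eta> + \<eta> - x) * rho0 \<eta>) = (\<lambda>\<eta>. \<eta> * rho0 \<eta> + x * (- rho0 \<eta>) + t * (u0 \<eta> * rho0 \<eta>))"
    by (simp add: fun_eq_iff algebra_simps)
  then show ?thesis unfolding F_II using II_lin3[OF lb_aF lb_bF lb_cF y] by simp
qed

lemma G_eq: "0 \<le> y \<Longrightarrow> Gfun ub rhob y x t =
   II (\<lambda>\<eta>. \<eta> * (ub \<eta> * ub \<eta> * rhob \<eta>)) y + x * II (\<lambda>\<eta>. rhob \<eta> * ub \<eta>) y + t * II (\<lambda>\<eta>. - (ub \<eta> * ub \<eta> * rhob \<eta>)) y"
proof -
  assume y: "0 \<le> y"
  have "(\<lambda>\<eta>. (x - ub \<eta> * (t - \<eta>)) * rhob \<eta> * ub \<eta>) = (\<lambda>\<eta>. \<eta> * (ub \<eta> * ub \<eta> * rhob \<eta>) + x * (rhob \<eta> * ub \<eta>) + t * (- (ub \<eta> * ub \<eta> * rhob \<eta>)))"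
    by (simp add: fun_eq_iff algebra_simps)
  then show ?thesis unfolding G_II using II_lin3[OF lb_aG lb_bG lb_cG y] by simp
qed

lemma II_mono_strict:
  assumes "locbm g" "\<And>\<eta>. 0 < \<eta> \<Longrightarrow> g \<eta> > 0"
  shows "\<And>u v. 0 \<le> u \<Longrightarrow> u < v \<Longrightarrow> II g u < II g v"
proof -
  fix u v :: real assume uv: "0 \<le> u" "u < v"
  have "II g v - II g u > 0" by (rule II_pos[OF assms(1) uv]) (use assms(2) uv in auto)
  then show "II g u < II g v" by simp
qed

lemma F_order:
  assumes "0 \<le> x1" "x1 < x2"
    and a: "a \<in> minimizers (\<lambda>y. Ffun u0 rho0 y x1 t)" and b: "b \<in> minimizers (\<lambda>y. Ffun u0 rho0 y x2 t)"
  shows "a \<le> b"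
proof (rule min_order[OF _ _ _ a b])
  show "0 < x2 - x1" using assms by simp
  show "\<And>u v. 0 \<le> u \<Longrightarrow> u < v \<Longrightarrow> II rho0 u < II rho0 v"
    by (rule II_mono_strict[OF lb_rho0]) (use rho0_pos in auto)
  fix s :: real assume s: "0 \<le> s"
  show "Ffun u0 rho0 s x2 t = Ffun u0 rho0 s x1 t - (x2 - x1) * II rho0 s"
    unfolding F_eq[OF s] II_minus by (simp add: algebra_simps)
qed

lemma G_order_t:
  assumes "t1 < t2"
    and a: "a \<in> minimizers (\<lambda>\<tau>. Gfun ub rhob \<tau> x t1)" and b: "b \<in> minimizers (\<lambda>\<tau>. Gfun ub rhob \<tau> x t2)"
  shows "a \<le> b"
proof (rule min_order[OF _ _ _ a b])
  show "0 < t2 - t1" using assms by simp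
  show "\<And>u v. 0 \<le> u \<Longrightarrow> u < v \<Longrightarrow> II (\<lambda>\<eta>. ub \<eta> * ub \<eta> * rhob \<eta>) u < II (\<lambda>\<eta>. ub \<eta> * ub \<eta> * rhob \<eta>) v"
    by (rule II_mono_strict[OF lb_H]) (use rhob_pos ub_pos in auto)
  fix s :: real assume s: "0 \<le> s"
  show "Gfun ub rhob s x t2 = Gfun ub rhob s x t1 - (t2 - t1) * II (\<lambda>\<eta>. ub \<eta> * ub \<eta> * rhob \<eta>) s"
    unfolding G_eq[OF s] II_minus by (simp add: algebra_simps)
qed

lemma G_order_x:
  assumes "x1 < x2"
    and a: "a \<in> minimizers (\<lambda>\<tau>. Gfun ub rhob \<tau> x2 t)" and b: "b \<in> minimizers (\<lambda>\<tau>. Gfun ub rhob \<tau> x1 t)"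
  shows "a \<le> b"
proof (rule min_order[OF _ _ _ a b])
  show "0 < x2 - x1" using assms by simp
  show "\<And>u v. 0 \<le> u \<Longrightarrow> u < v \<Longrightarrow> II (\<lambda>\<eta>. rhob \<eta> * ub \<eta>) u < II (\<lambda>\<eta>. rhob \<eta> * ub \<eta>) v"
    by (rule II_mono_strict[OF lb_bG]) (use rhob_pos ub_pos in auto)
  fix s :: real assume s: "0 \<le> s"
  show "Gfun ub rhob s x1 t = Gfun ub rhob s x2 t - (x2 - x1) * II (\<lambda>\<eta>. rhob \<eta> * ub \<eta>) s"
    unfolding G_eq[OF s] by (simp add: algebra_simps)
qed

end



context lwr begin

lemma F_bound:
  assumes Bu: "\<forall>\<eta>\<ge>0. \<bar>u0 \<eta>\<bar> \<le> Bu" and x: "0 \<le> x" and t: "0 \<le> t"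
  shows "minimizers (\<lambda>y. Ffun u0 rho0 y x t) \<subseteq> {0..x + t * Bu}"
proof
  fix y assume y: "y \<in> minimizers (\<lambda>y. Ffun u0 rho0 y x t)"
  have Bu0: "0 \<le> Bu" using Bu[rule_format, of 0] by simp
  define Y0 where "Y0 = x + t * Bu"
  have Y00: "0 \<le> Y0" unfolding Y0_def using x t Bu0 by simp
  have y0: "0 \<le> y" using y unfolding minimizers_def by auto
  have "y \<le> Y0"
  proof (rule ccontr)
    assume "\<not> y \<le> Y0"
    then have lt: "Y0 < y" by simp
    have lf: "locbm (\<lambda>\<eta>. (t * u0 \<eta> + \<eta> - x) * rho0 \<eta>)"
      by (intro locbm_mult locbm_diff locbm_add locbm_const locbm_id lbs)
    have "II (\<lambda>\<eta>. (t * u0 \<eta> + \<eta> - x) * rho0 \<eta>) y - II (\<lambda>\<eta>. (t * u0 \<eta> + \<eta> - x) * rho0 \<eta>) Y0 > 0"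
    proof (rule II_pos[OF lf Y00 lt])
      fix \<eta> assume e: "Y0 < \<eta>" "\<eta> < y"
      then have e0: "0 \<le> \<eta>" using Y00 by simp
      have "- Bu \<le> u0 \<eta>" using Bu e0 by (auto dest!: spec[of _ \<eta>])
      then have "t * (- Bu) \<le> t * u0 \<eta>" using t by (rule mult_left_mono)
      then have "0 < t * u0 \<eta> + \<eta> - x" using e unfolding Y0_def by simp
      moreover have "0 < rho0 \<eta>" using rho0_pos e0 by simp
      ultimately show "0 < (t * u0 \<eta> + \<eta> - x) * rho0 \<eta>" by simp
    qed
    moreover have "Ffun u0 rho0 y x t \<le> Ffun u0 rho0 Y0 x t" using y Y00 unfolding minimizers_def by auto
    ultimately show False unfolding F_II by simp
  qed
  then show "y \<in> {0..x + t * Bu}" using y0 unfolding Y0_def by simp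
qed

lemma G_bound:
  assumes x: "0 \<le> x" and t: "0 \<le> t"
  shows "minimizers (\<lambda>\<tau>. Gfun ub rhob \<tau> x t) \<subseteq> {0..t}"
proof
  fix y assume y: "y \<in> minimizers (\<lambda>\<tau>. Gfun ub rhob \<tau> x t)"
  have y0: "0 \<le> y" using y unfolding minimizers_def by auto
  have "y \<le> t"
  proof (rule ccontr)
    assume "\<not> y \<le> t"
    then have lt: "t < y" by simp
    have lf: "locbm (\<lambda>\<eta>. (x - ub \<eta> * (t - \<eta>)) * rhob \<eta> * ub \<eta>)"
      by (intro locbm_mult locbm_diff locbm_add locbm_const locbm_id lbs)
    have "II (\<lambda>\<eta>. (x - ub \<eta> * (t - \<eta>)) * rhob \<eta> * ub \<eta>) y - II (\<lambda>\<eta>. (x - ub \<eta> * (t - \<eta>)) * rhob \<eta> * ub \<eta>) t > 0"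
    proof (rule II_pos[OF lf t lt])
      fix \<eta> assume e: "t < \<eta>" "\<eta> < y"
      then have e0: "0 \<le> \<eta>" using t by simp
      have u: "0 < ub \<eta>" using ub_pos e0 by simp
      have "0 < ub \<eta> * (\<eta> - t)" using u e by simp
      then have "0 < x - ub \<eta> * (t - \<eta>)" using x by (simp add: algebra_simps)
      moreover have "0 < rhob \<eta>" using rhob_pos e0 by simp
      ultimately show "0 < (x - ub \<eta> * (t - \<eta>)) * rhob \<eta> * ub \<eta>" using u by simp
    qed
    moreover have "Gfun ub rhob y x t \<le> Gfun ub rhob t x t" using y t unfolding minimizers_def by auto
    ultimately show False unfolding G_II by simp
  qed
  then show "y \<in> {0..t}" using y0 by simp
qed

lemma G_zero:
  assumes t: "0 \<le> t"
  shows "minimizers (\<lambda>\<tau>. Gfun ub rhob \<tau> 0 t) = {t}"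
proof -
  let ?g = "\<lambda>\<eta>. (0 - ub \<eta> * (t - \<eta>)) * rhob \<eta> * ub \<eta>"
  have lf: "locbm ?g" by (intro locbm_mult locbm_diff locbm_add locbm_const locbm_id lbs)
  have lfm: "locbm (\<lambda>\<eta>. - ?g \<eta>)" by (rule locbm_minus[OF lf])
  have gt: "Gfun ub rhob t 0 t < Gfun ub rhob s 0 t" if s: "0 \<le> s" "s \<noteq> t" for s
  proof (cases "s < t")
    case True
    have "II (\<lambda>\<eta>. - ?g \<eta>) t - II (\<lambda>\<eta>. - ?g \<eta>) s > 0"
    proof (rule II_pos[OF lfm s(1) True])
      fix \<eta> assume e: "s < \<eta>" "\<eta> < t"
      then have e0: "0 \<le> \<eta>" using s by simp
      have u: "0 < ub \<eta>" using ub_pos e0 by simp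
      have "0 < ub \<eta> * (t - \<eta>)" using u e by simp
      moreover have "0 < rhob \<eta>" using rhob_pos e0 by simp
      ultimately show "0 < - ?g \<eta>" using u by simp
    qed
    then show ?thesis unfolding G_II II_minus by simp
  next
    case False
    then have lt: "t < s" using s by simp
    have "II ?g s - II ?g t > 0"
    proof (rule II_pos[OF lf t lt])
      fix \<eta> assume e: "t < \<eta>" "\<eta> < s"
      then have e0: "0 \<le> \<eta>" using t by simp
      have u: "0 < ub \<eta>" using ub_pos e0 by simp
      have "0 < ub \<eta> * (\<eta> - t)" using u e by simp
      then have "0 < 0 - ub \<eta> * (t - \<eta>)" by (simp add: algebra_simps)
      moreover have "0 < rhob \<eta>" using rhob_pos e0 by simp
      ultimately show "0 < ?g \<eta>" using u by (intro mult_pos_pos) auto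
    qed
    then show ?thesis unfolding G_II by simp
  qed
  show ?thesis
  proof (rule set_eqI, rule iffI)
    fix s assume "s \<in> minimizers (\<lambda>\<tau>. Gfun ub rhob \<tau> 0 t)"
    then have "0 \<le> s" "Gfun ub rhob s 0 t \<le> Gfun ub rhob t 0 t" using t unfolding minimizers_def by auto
    then show "s \<in> {t}" using gt[of s] by force
  next
    fix s assume "s \<in> {t}"
    then show "s \<in> minimizers (\<lambda>\<tau>. Gfun ub rhob \<tau> 0 t)" unfolding minimizers_def
      using t gt by (auto intro: less_imp_le)
  qed
qed

lemma F_ne: "0 \<le> x \<Longrightarrow> 0 \<le> t \<Longrightarrow> minimizers (\<lambda>y. Ffun u0 rho0 y x t) \<noteq> {}"
  using F_attained unfolding minimizers_def by blast

lemma G_ne: "0 \<le> x \<Longrightarrow> 0 \<le> t \<Longrightarrow> minimizers (\<lambda>\<tau>. Gfun ub rhob \<tau> x t) \<noteq> {}"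
  using G_attained unfolding minimizers_def by blast

end



context lwr begin

lemma near_bound:
  fixes q p :: "real \<times> real"
  assumes "dist q p < 1" shows "fst q \<le> fst p + 1" "snd q \<le> snd p + 1"
proof -
  have "\<bar>fst q - fst p\<bar> \<le> dist q p" using dist_fst_le[of q p] by (simp add: dist_real_def)
  then show "fst q \<le> fst p + 1" using assms by linarith
  have "\<bar>snd q - snd p\<bar> \<le> dist q p" using dist_snd_le[of q p] by (simp add: dist_real_def)
  then show "snd q \<le> snd p + 1" using assms by linarith
qed

lemma F_cont: "\<forall>M. continuous_on {0..M} (\<lambda>y. Ffun u0 rho0 y x t)"
  using Phi_cont[OF lb_aF lb_bF lb_cF F_eq] by blast

lemma G_cont: "\<forall>M. continuous_on {0..M} (\<lambda>y. Gfun ub rhob y x t)"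
  using Phi_cont[OF lb_aG lb_bG lb_cG G_eq] by blast

lemma F_unif: "\<forall>M e. e > 0 \<longrightarrow> (\<exists>r>0. \<forall>q\<in>D. dist q p < r \<longrightarrow>
   (\<forall>s\<in>{0..M}. \<bar>Ffun u0 rho0 s (fst q) (snd q) - Ffun u0 rho0 s (fst p) (snd p)\<bar> < e))"
proof (intro allI impI)
  fix M e :: real assume "e > 0"
  then show "\<exists>r>0. \<forall>q\<in>D. dist q p < r \<longrightarrow>
   (\<forall>s\<in>{0..M}. \<bar>Ffun u0 rho0 s (fst q) (snd q) - Ffun u0 rho0 s (fst p) (snd p)\<bar> < e)"
    using Phi_unif[OF lb_bF lb_cF, where h = "\<lambda>q s. Ffun u0 rho0 s (fst q) (snd q)", OF F_eq] by blast
qed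

lemma G_unif: "\<forall>M e. e > 0 \<longrightarrow> (\<exists>r>0. \<forall>q\<in>D. dist q p < r \<longrightarrow>
   (\<forall>s\<in>{0..M}. \<bar>Gfun ub rhob s (fst q) (snd q) - Gfun ub rhob s (fst p) (snd p)\<bar> < e))"
proof (intro allI impI)
  fix M e :: real assume "e > 0"
  then show "\<exists>r>0. \<forall>q\<in>D. dist q p < r \<longrightarrow>
   (\<forall>s\<in>{0..M}. \<bar>Gfun ub rhob s (fst q) (snd q) - Gfun ub rhob s (fst p) (snd p)\<bar> < e)"
    using Phi_unif[OF lb_bG lb_cG, where h = "\<lambda>q s. Gfun ub rhob s (fst q) (snd q)", OF G_eq] by blast
qed

lemma F_ne': "\<forall>q\<in>{0..} \<times> {0..}. minimizers (\<lambda>y. Ffun u0 rho0 y (fst q) (snd q)) \<noteq> {}"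
  using F_ne by auto

lemma G_ne': "\<forall>q\<in>{0..} \<times> {0..}. minimizers (\<lambda>y. Gfun ub rhob y (fst q) (snd q)) \<noteq> {}"
  using G_ne by auto

lemma F_bnd: "\<exists>Y r. r > 0 \<and> (\<forall>q\<in>{0..} \<times> {0..}. dist q p < r \<longrightarrow> minimizers (\<lambda>y. Ffun u0 rho0 y (fst q) (snd q)) \<subseteq> {..Y})"
proof -
  obtain Bu where Bu: "\<forall>\<eta>\<ge>0. \<bar>u0 \<eta>\<bar> \<le> Bu" using u0_bdd by blast
  have Bu0: "0 \<le> Bu" using Bu[rule_format, of 0] by simp
  show ?thesis
  proof (rule exI[of _ "fst p + 1 + (snd p + 1) * Bu"], rule exI[of _ 1], intro conjI ballI impI)
    fix q :: "real \<times> real" assume q: "q \<in> {0..} \<times> {0..}" "dist q p < 1"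
    have "minimizers (\<lambda>y. Ffun u0 rho0 y (fst q) (snd q)) \<subseteq> {0..fst q + snd q * Bu}"
      using q by (intro F_bound[OF Bu]) auto
    moreover have "snd q * Bu \<le> (snd p + 1) * Bu" using near_bound[OF q(2)] Bu0 by (intro mult_right_mono) auto
    ultimately show "minimizers (\<lambda>y. Ffun u0 rho0 y (fst q) (snd q)) \<subseteq> {..fst p + 1 + (snd p + 1) * Bu}"
      using near_bound[OF q(2)] by auto
  qed simp
qed

lemma G_bnd: "\<exists>Y r. r > 0 \<and> (\<forall>q\<in>{0..} \<times> {0..}. dist q p < r \<longrightarrow> minimizers (\<lambda>y. Gfun ub rhob y (fst q) (snd q)) \<subseteq> {..Y})"
proof (rule exI[of _ "snd p + 1"], rule exI[of _ 1], intro conjI ballI impI)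
  fix q :: "real \<times> real" assume q: "q \<in> {0..} \<times> {0..}" "dist q p < 1"
  have "minimizers (\<lambda>y. Gfun ub rhob y (fst q) (snd q)) \<subseteq> {0..snd q}"
    using q by (intro G_bound) auto
  then show "minimizers (\<lambda>y. Gfun ub rhob y (fst q) (snd q)) \<subseteq> {..snd p + 1}"
    using near_bound[OF q(2)] by auto
qed simp

lemma y_lsc: "lsc_on ({0..} \<times> {0..}) (\<lambda>p. ylow u0 rho0 (fst p) (snd p))"
  unfolding lsc_on_def ylow_def
proof (intro ballI allI impI)
  fix p :: "real \<times> real" and c assume p: "p \<in> {0..} \<times> {0..}"
    and c: "c < Inf (minimizers (\<lambda>y. Ffun u0 rho0 y (fst p) (snd p)))"
  show "\<forall>\<^sub>F q in at p within {0..} \<times> {0..}. c < Inf (minimizers (\<lambda>y. Ffun u0 rho0 y (fst q) (snd q)))"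
    by (rule min_lsc[where h = "\<lambda>q y. Ffun u0 rho0 y (fst q) (snd q)", OF p F_ne' F_cont F_unif c])
qed

lemma y_usc: "usc_on ({0..} \<times> {0..}) (\<lambda>p. yup u0 rho0 (fst p) (snd p))"
  unfolding usc_on_def yup_def
proof (intro ballI allI impI)
  fix p :: "real \<times> real" and c assume p: "p \<in> {0..} \<times> {0..}"
    and c: "Sup (minimizers (\<lambda>y. Ffun u0 rho0 y (fst p) (snd p))) < c"
  show "\<forall>\<^sub>F q in at p within {0..} \<times> {0..}. Sup (minimizers (\<lambda>y. Ffun u0 rho0 y (fst q) (snd q))) < c"
    by (rule min_usc[where h = "\<lambda>q y. Ffun u0 rho0 y (fst q) (snd q)", OF p F_ne' F_cont F_unif F_bnd c])
qed

lemma tau_lsc: "lsc_on ({0..} \<times> {0..}) (\<lambda>p. taulow ub rhob (fst p) (snd p))"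
  unfolding lsc_on_def taulow_def
proof (intro ballI allI impI)
  fix p :: "real \<times> real" and c assume p: "p \<in> {0..} \<times> {0..}"
    and c: "c < Inf (minimizers (\<lambda>y. Gfun ub rhob y (fst p) (snd p)))"
  show "\<forall>\<^sub>F q in at p within {0..} \<times> {0..}. c < Inf (minimizers (\<lambda>y. Gfun ub rhob y (fst q) (snd q)))"
    by (rule min_lsc[where h = "\<lambda>q y. Gfun ub rhob y (fst q) (snd q)", OF p G_ne' G_cont G_unif c])
qed

lemma tau_usc: "usc_on ({0..} \<times> {0..}) (\<lambda>p. tauup ub rhob (fst p) (snd p))"
  unfolding usc_on_def tauup_def
proof (intro ballI allI impI)
  fix p :: "real \<times> real" and c assume p: "p \<in> {0..} \<times> {0..}"
    and c: "Sup (minimizers (\<lambda>y. Gfun ub rhob y (fst p) (snd p))) < c"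
  show "\<forall>\<^sub>F q in at p within {0..} \<times> {0..}. Sup (minimizers (\<lambda>y. Gfun ub rhob y (fst q) (snd q))) < c"
    by (rule min_usc[where h = "\<lambda>q y. Gfun ub rhob y (fst q) (snd q)", OF p G_ne' G_cont G_unif G_bnd c])
qed

lemma part1a: "\<forall>x\<ge>0. \<forall>t1\<ge>0. \<forall>t2. t1 \<le> t2 \<longrightarrow>
        taulow ub rhob x t1 \<le> taulow ub rhob x t2 \<and> tauup ub rhob x t1 \<le> tauup ub rhob x t2"
proof (intro allI impI)
  fix x t1 t2 :: real assume x: "0 \<le> x" and t1: "0 \<le> t1" and le: "t1 \<le> t2"
  show "taulow ub rhob x t1 \<le> taulow ub rhob x t2 \<and> tauup ub rhob x t1 \<le> tauup ub rhob x t2"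
  proof (cases "t1 = t2")
    case False
    then have lt: "t1 < t2" using le by simp
    have t2: "0 \<le> t2" using t1 le by simp
    note m = minset_order[OF G_ne[OF x t1] G_ne[OF x t2] G_bound[OF x t1] G_bound[OF x t2] G_order_t[OF lt]]
    then show ?thesis unfolding taulow_def tauup_def by simp
  qed simp
qed

lemma part1b: "\<forall>t\<ge>0. \<forall>x1\<ge>0. \<forall>x2. x1 \<le> x2 \<longrightarrow>
        taulow ub rhob x2 t \<le> taulow ub rhob x1 t \<and> tauup ub rhob x2 t \<le> tauup ub rhob x1 t"
proof (intro allI impI)
  fix t x1 x2 :: real assume t: "0 \<le> t" and x1: "0 \<le> x1" and le: "x1 \<le> x2"
  show "taulow ub rhob x2 t \<le> taulow ub rhob x1 t \<and> tauup ub rhob x2 t \<le> tauup ub rhob x1 t"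
  proof (cases "x1 = x2")
    case False
    then have lt: "x1 < x2" using le by simp
    have x2: "0 \<le> x2" using x1 le by simp
    note m = minset_order[OF G_ne[OF x2 t] G_ne[OF x1 t] G_bound[OF x2 t] G_bound[OF x1 t] G_order_x[OF lt]]
    then show ?thesis unfolding taulow_def tauup_def by simp
  qed simp
qed

lemma part1c: "\<forall>x\<ge>0. \<forall>t1\<ge>0. \<forall>t2. t1 < t2 \<longrightarrow> tauup ub rhob x t1 \<le> taulow ub rhob x t2"
proof (intro allI impI)
  fix x t1 t2 :: real assume x: "0 \<le> x" and t1: "0 \<le> t1" and lt: "t1 < t2"
  have t2: "0 \<le> t2" using t1 lt by simp
  note m = minset_order[OF G_ne[OF x t1] G_ne[OF x t2] G_bound[OF x t1] G_bound[OF x t2] G_order_t[OF lt]]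
  then show "tauup ub rhob x t1 \<le> taulow ub rhob x t2" unfolding taulow_def tauup_def by simp
qed

lemma part1d: "\<forall>t\<ge>0. \<forall>x1\<ge>0. \<forall>x2. x1 < x2 \<longrightarrow> tauup ub rhob x2 t \<le> taulow ub rhob x1 t"
proof (intro allI impI)
  fix t x1 x2 :: real assume t: "0 \<le> t" and x1: "0 \<le> x1" and lt: "x1 < x2"
  have x2: "0 \<le> x2" using x1 lt by simp
  note m = minset_order[OF G_ne[OF x2 t] G_ne[OF x1 t] G_bound[OF x2 t] G_bound[OF x1 t] G_order_x[OF lt]]
  then show "tauup ub rhob x2 t \<le> taulow ub rhob x1 t" unfolding taulow_def tauup_def by simp
qed

lemma part2a: "\<forall>t\<ge>0. \<forall>x1\<ge>0. \<forall>x2. x1 \<le> x2 \<longrightarrow>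
        ylow u0 rho0 x1 t \<le> ylow u0 rho0 x2 t \<and> yup u0 rho0 x1 t \<le> yup u0 rho0 x2 t"
proof (intro allI impI)
  fix t x1 x2 :: real assume t: "0 \<le> t" and x1: "0 \<le> x1" and le: "x1 \<le> x2"
  obtain Bu where Bu: "\<forall>\<eta>\<ge>0. \<bar>u0 \<eta>\<bar> \<le> Bu" using u0_bdd by blast
  show "ylow u0 rho0 x1 t \<le> ylow u0 rho0 x2 t \<and> yup u0 rho0 x1 t \<le> yup u0 rho0 x2 t"
  proof (cases "x1 = x2")
    case False
    then have lt: "x1 < x2" using le by simp
    have x2: "0 \<le> x2" using x1 le by simp
    note m = minset_order[OF F_ne[OF x1 t] F_ne[OF x2 t] F_bound[OF Bu x1 t] F_bound[OF Bu x2 t] F_order[OF x1 lt]]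
    then show ?thesis unfolding ylow_def yup_def by simp
  qed simp
qed

lemma part2b: "\<forall>t\<ge>0. \<forall>x1\<ge>0. \<forall>x2. x1 < x2 \<longrightarrow> yup u0 rho0 x1 t \<le> ylow u0 rho0 x2 t"
proof (intro allI impI)
  fix t x1 x2 :: real assume t: "0 \<le> t" and x1: "0 \<le> x1" and lt: "x1 < x2"
  obtain Bu where Bu: "\<forall>\<eta>\<ge>0. \<bar>u0 \<eta>\<bar> \<le> Bu" using u0_bdd by blast
  have x2: "0 \<le> x2" using x1 lt by simp
  note m = minset_order[OF F_ne[OF x1 t] F_ne[OF x2 t] F_bound[OF Bu x1 t] F_bound[OF Bu x2 t] F_order[OF x1 lt]]
  then show "yup u0 rho0 x1 t \<le> ylow u0 rho0 x2 t" unfolding ylow_def yup_def by simp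
qed

lemma part3: "\<forall>t\<ge>0. taulow ub rhob 0 t = t \<and> tauup ub rhob 0 t = t"
  unfolding taulow_def tauup_def using G_zero by simp

end

theorem lemma2p1:
  fixes u0 ub rho0 rhob :: "real \<Rightarrow> real"
  assumes u0_meas: "set_borel_measurable lborel {0..} u0"
      and ub_meas: "set_borel_measurable lborel {0..} ub"
      and rho0_meas: "set_borel_measurable lborel {0..} rho0"
      and rhob_meas: "set_borel_measurable lborel {0..} rhob"
      and u0_bdd: "\<exists>B. \<forall>\<eta>\<ge>0. \<bar>u0 \<eta>\<bar> \<le> B"
      and ub_bdd: "\<exists>B. \<forall>\<eta>\<ge>0. \<bar>ub \<eta>\<bar> \<le> B"
      and ub_pos: "\<forall>\<eta>\<ge>0. ub \<eta> > 0"
      and rho0_pos: "\<forall>\<eta>\<ge>0. rho0 \<eta> > 0"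
      and rhob_pos: "\<forall>\<eta>\<ge>0. rhob \<eta> > 0"
      and rho0_locbdd: "\<forall>M. \<exists>B. \<forall>\<eta>\<in>{0..M}. rho0 \<eta> \<le> B"
      and rhob_locbdd: "\<forall>M. \<exists>B. \<forall>\<eta>\<in>{0..M}. rhob \<eta> \<le> B"
      and F_attained: "\<forall>x\<ge>0. \<forall>t\<ge>0. \<exists>y\<ge>0. \<forall>z\<ge>0. Ffun u0 rho0 y x t \<le> Ffun u0 rho0 z x t"
      and G_attained: "\<forall>x\<ge>0. \<forall>t\<ge>0. \<exists>\<tau>\<ge>0. \<forall>s\<ge>0. Gfun ub rhob \<tau> x t \<le> Gfun ub rhob s x t"
  shows
    \<comment> \<open>(1)\<close>
    "(\<forall>x\<ge>0. \<forall>t1\<ge>0. \<forall>t2. t1 \<le> t2 \<longrightarrow>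
        taulow ub rhob x t1 \<le> taulow ub rhob x t2 \<and> tauup ub rhob x t1 \<le> tauup ub rhob x t2)
     \<and> (\<forall>t\<ge>0. \<forall>x1\<ge>0. \<forall>x2. x1 \<le> x2 \<longrightarrow>
        taulow ub rhob x2 t \<le> taulow ub rhob x1 t \<and> tauup ub rhob x2 t \<le> tauup ub rhob x1 t)
     \<and> (\<forall>x\<ge>0. \<forall>t1\<ge>0. \<forall>t2. t1 < t2 \<longrightarrow> tauup ub rhob x t1 \<le> taulow ub rhob x t2)
     \<and> (\<forall>t\<ge>0. \<forall>x1\<ge>0. \<forall>x2. x1 < x2 \<longrightarrow> tauup ub rhob x2 t \<le> taulow ub rhob x1 t)
     \<comment> \<open>(2)\<close>
     \<and> (\<forall>t\<ge>0. \<forall>x1\<ge>0. \<forall>x2. x1 \<le> x2 \<longrightarrow>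
        ylow u0 rho0 x1 t \<le> ylow u0 rho0 x2 t \<and> yup u0 rho0 x1 t \<le> yup u0 rho0 x2 t)
     \<and> (\<forall>t\<ge>0. \<forall>x1\<ge>0. \<forall>x2. x1 < x2 \<longrightarrow> yup u0 rho0 x1 t \<le> ylow u0 rho0 x2 t)
     \<comment> \<open>(3)\<close>
     \<and> (\<forall>t\<ge>0. taulow ub rhob 0 t = t \<and> tauup ub rhob 0 t = t)
     \<comment> \<open>(4)\<close>
     \<and> lsc_on ({0..} \<times> {0..}) (\<lambda>p. ylow u0 rho0 (fst p) (snd p))
     \<and> usc_on ({0..} \<times> {0..}) (\<lambda>p. yup u0 rho0 (fst p) (snd p))
     \<comment> \<open>(5)\<close>
     \<and> lsc_on ({0..} \<times> {0..}) (\<lambda>p. taulow ub rhob (fst p) (snd p))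
     \<and> usc_on ({0..} \<times> {0..}) (\<lambda>p. tauup ub rhob (fst p) (snd p))"
  proof -
  interpret lwr u0 ub rho0 rhob
    by (rule lwr.intro[OF u0_meas ub_meas rho0_meas rhob_meas u0_bdd ub_bdd ub_pos rho0_pos rhob_pos
          rho0_locbdd rhob_locbdd F_attained G_attained])
  show ?thesis
    using part1a part1b part1c part1d part2a part2b part3 y_lsc y_usc tau_lsc tau_usc by blast
qed

end
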